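(* Let $\lambda\in(0,r^\alpha)$ and consider the $\lambda$-NRW on the augmented tree. Then for every $f\in\mathcal D_X$, the trace function $\mathrm{Tr}f$ is continuous on $K$.
   Context: Let $\{S_i\}_{i=1}^N$ ($N\ge2$) be contractive similitudes of $\mathbb R^d$ with ratios $r_i\in(0,1)$ satisfying the open set condition; $K$ the self-similar set, $\alpha$ its Hausdorff dimension, $r=\min r_i$. $\Sigma^*$ finite words with empty word $\vartheta$, $S_{\mathbf x}=S_{i_1}\circ\cdots\circ S_{i_k}$, $r_{\mathbf x}=r_{i_1}\cdots r_{i_k}$. $\mathcal J_0=\{\vartheta\}$, $\mathcal J_n=\{i_1\cdots i_k:r_{i_1\cdots i_k}\le r^n<r_{i_1\cdots i_{k-1}}\}$, $X=\bigcup_n\mathcal J_n$, $|\mathbf x|=n$ on $\mathcal J_n$, parent $\mathbf x^-$ the prefix in $\mathcal J_{n-1}$. Edges: $\{\mathbf x,\mathbf x^-\}$ and horizontal $\{\mathbf x,\mathbf y\}$ ($\mathbf x\ne\mathbf y\in\mathcal J_n$, $\inf_{\xi,\eta\in K}|S_{\mathbf x}(\xi)-S_{\mathbf y}(\eta)|\le\gamma r^n$). Geodesic ray: $(\mathbf x_n)$, $\mathbf x_n\in\mathcal J_n$, each a prefix of the next, converging to $\xi$ if $\xi\in S_{\mathbf x_n}(K)$ for all $n$. $\lambda$-NRW conductances: $c(\mathbf x,\mathbf x^-)=r_{\mathbf x}^\alpha\lambda^{-|\mathbf x|}$, $c(\mathbf x,\mathbf y)\asymp r_{\mathbf x}^\alpha\lambda^{-|\mathbf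 x|}$ on horizontal edges. $\mathcal E_X[f]=\frac12\sum_{\mathbf x\sim\mathbf y}c(\mathbf x,\mathbf y)(f(\mathbf x)-f(\mathbf y))^2$, $\mathcal D_X=\{f:\mathcal E_X[f]<\infty\}$. For $\lambda\in(0,r^\alpha)$ and $f\in\mathcal D_X$, $\mathrm{Tr}f(\xi)=\lim_nf(\mathbf x_n)$ for any geodesic ray $(\mathbf x_n)$ converging to $\xi$; this limit exists and does not depend on the ray. *)

theory Defs
  imports "HOL-Analysis.Analysis" "HOL-Library.Sublist"
begin

definition hausdorff_pre :: "real \<Rightarrow> real \<Rightarrow> 'a::metric_space set \<Rightarrow> ennreal" where
  "hausdorff_pre s \<delta> E =
     (INF U \<in> {U :: nat \<Rightarrow> 'a set. E \<subseteq> (\<Union>i. U i) \<and> (\<forall>i. bounded (U i) \<and> diameter (U i) \<le> \<delta>)}.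
        (\<Sum>i. ennreal (diameter (U i) powr s)))"

definition hausdorff_measure :: "real \<Rightarrow> 'a::metric_space set \<Rightarrow> ennreal" where
  "hausdorff_measure s E = (SUP \<delta> \<in> {0<..}. hausdorff_pre s \<delta> E)"

definition hausdorff_dim :: "'a::metric_space set \<Rightarrow> real" where
  "hausdorff_dim E = Inf {s. s > 0 \<and> hausdorff_measure s E = 0}"

definition similitude :: "('a::metric_space \<Rightarrow> 'a) \<Rightarrow> real \<Rightarrow> bool" where
  "similitude T c \<longleftrightarrow> (\<forall>x y. dist (T x) (T y) = c * dist x y)"

definition open_set_condition :: "nat \<Rightarrow> (nat \<Rightarrow> 'a::topological_space \<Rightarrow> 'a) \<Rightarrow> bool" where
  "open_set_condition N S \<longleftrightarrow>
     (\<exists>U. open U \<and> U \<noteq> {} \<and> (\<forall>i<N. S i ` U \<subseteq> U) \<and>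
          (\<forall>i<N. \<forall>j<N. i \<noteq> j \<longrightarrow> S i ` U \<inter> S j ` U = {}))"

definition self_similar_set :: "nat \<Rightarrow> (nat \<Rightarrow> 'a::metric_space \<Rightarrow> 'a) \<Rightarrow> 'a set \<Rightarrow> bool" where
  "self_similar_set N S K \<longleftrightarrow> compact K \<and> K \<noteq> {} \<and> K = (\<Union>i<N. S i ` K)"

definition rw :: "(nat \<Rightarrow> real) \<Rightarrow> nat list \<Rightarrow> real" where
  "rw r x = prod_list (map r x)"

definition Sw :: "(nat \<Rightarrow> 'a \<Rightarrow> 'a) \<Rightarrow> nat list \<Rightarrow> 'a \<Rightarrow> 'a" where
  "Sw S x = foldr (\<lambda>i g. S i \<circ> g) x id"

definition rmin :: "nat \<Rightarrow> (nat \<Rightarrow> real) \<Rightarrow> real" where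
  "rmin N r = Min (r ` {..<N})"

definition Jlev :: "nat \<Rightarrow> (nat \<Rightarrow> real) \<Rightarrow> nat \<Rightarrow> nat list set" where
  "Jlev N r n = (if n = 0 then {[]} else
     {x. set x \<subseteq> {..<N} \<and> x \<noteq> [] \<and> rw r x \<le> rmin N r ^ n \<and> rmin N r ^ n < rw r (butlast x)})"

definition level :: "nat \<Rightarrow> (nat \<Rightarrow> real) \<Rightarrow> nat list \<Rightarrow> nat" where
  "level N r x = (LEAST n. x \<in> Jlev N r n)"

definition vedge :: "nat \<Rightarrow> (nat \<Rightarrow> real) \<Rightarrow> nat list \<Rightarrow> nat list \<Rightarrow> bool" where
  "vedge N r x y \<longleftrightarrow> (\<exists>n\<ge>1. x \<in> Jlev N r n \<and> y \<in> Jlev N r (n - 1) \<and> prefix y x)"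

definition hedge :: "nat \<Rightarrow> (nat \<Rightarrow> real) \<Rightarrow> (nat \<Rightarrow> 'a::metric_space \<Rightarrow> 'a) \<Rightarrow> 'a set \<Rightarrow> real
    \<Rightarrow> nat list \<Rightarrow> nat list \<Rightarrow> bool" where
  "hedge N r S K \<gamma> x y \<longleftrightarrow>
     (\<exists>n. x \<in> Jlev N r n \<and> y \<in> Jlev N r n \<and> x \<noteq> y \<and>
          (INF p \<in> K \<times> K. dist (Sw S x (fst p)) (Sw S y (snd p))) \<le> \<gamma> * rmin N r ^ n)"

definition adj :: "nat \<Rightarrow> (nat \<Rightarrow> real) \<Rightarrow> (nat \<Rightarrow> 'a::metric_space \<Rightarrow> 'a) \<Rightarrow> 'a set \<Rightarrow> real
    \<Rightarrow> nat list \<Rightarrow> nat list \<Rightarrow> bool" where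
  "adj N r S K \<gamma> x y \<longleftrightarrow> vedge N r x y \<or> vedge N r y x \<or> hedge N r S K \<gamma> x y"

definition base_cond :: "nat \<Rightarrow> (nat \<Rightarrow> real) \<Rightarrow> real \<Rightarrow> real \<Rightarrow> nat list \<Rightarrow> real" where
  "base_cond N r \<alpha> lam x = rw r x powr \<alpha> / lam ^ level N r x"

definition cond :: "nat \<Rightarrow> (nat \<Rightarrow> real) \<Rightarrow> (nat \<Rightarrow> 'a::metric_space \<Rightarrow> 'a) \<Rightarrow> 'a set \<Rightarrow> real
    \<Rightarrow> real \<Rightarrow> real \<Rightarrow> (nat list \<Rightarrow> nat list \<Rightarrow> real) \<Rightarrow> nat list \<Rightarrow> nat list \<Rightarrow> real" where
  "cond N r S K \<gamma> \<alpha> lam h x y =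
     (if vedge N r x y then base_cond N r \<alpha> lam x
      else if vedge N r y x then base_cond N r \<alpha> lam y
      else if hedge N r S K \<gamma> x y then h x y else 0)"

definition admissible_hcond :: "nat \<Rightarrow> (nat \<Rightarrow> real) \<Rightarrow> (nat \<Rightarrow> 'a::metric_space \<Rightarrow> 'a) \<Rightarrow> 'a set
    \<Rightarrow> real \<Rightarrow> real \<Rightarrow> real \<Rightarrow> (nat list \<Rightarrow> nat list \<Rightarrow> real) \<Rightarrow> bool" where
  "admissible_hcond N r S K \<gamma> \<alpha> lam h \<longleftrightarrow>
     (\<exists>C>0. \<forall>x y. hedge N r S K \<gamma> x y \<longrightarrow>
        h x y = h y x \<and> base_cond N r \<alpha> lam x / C \<le> h x y \<and> h x y \<le> C * base_cond N r \<alpha> lam x)"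

definition energy :: "nat \<Rightarrow> (nat \<Rightarrow> real) \<Rightarrow> (nat \<Rightarrow> 'a::metric_space \<Rightarrow> 'a) \<Rightarrow> 'a set \<Rightarrow> real
    \<Rightarrow> real \<Rightarrow> real \<Rightarrow> (nat list \<Rightarrow> nat list \<Rightarrow> real) \<Rightarrow> (nat list \<Rightarrow> real) \<Rightarrow> ennreal" where
  "energy N r S K \<gamma> \<alpha> lam h f =
     ennreal (1/2) * (\<Sum>\<^sub>\<infinity>(x, y) \<in> {(x, y). adj N r S K \<gamma> x y}.
        ennreal (cond N r S K \<gamma> \<alpha> lam h x y * (f x - f y)^2))"

definition geodesic_ray :: "nat \<Rightarrow> (nat \<Rightarrow> real) \<Rightarrow> (nat \<Rightarrow> 'a \<Rightarrow> 'a) \<Rightarrow> 'a set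
    \<Rightarrow> (nat \<Rightarrow> nat list) \<Rightarrow> 'a \<Rightarrow> bool" where
  "geodesic_ray N r S K xs \<xi> \<longleftrightarrow>
     (\<forall>n. xs n \<in> Jlev N r n \<and> prefix (xs n) (xs (Suc n)) \<and> \<xi> \<in> Sw S (xs n) ` K)"

definition trace :: "nat \<Rightarrow> (nat \<Rightarrow> real) \<Rightarrow> (nat \<Rightarrow> 'a \<Rightarrow> 'a) \<Rightarrow> 'a set
    \<Rightarrow> (nat list \<Rightarrow> real) \<Rightarrow> 'a \<Rightarrow> real" where
  "trace N r S K f \<xi> = lim (\<lambda>n. f ((SOME xs. geodesic_ray N r S K xs \<xi>) n))"

end

theory Submission
  imports Defs
begin

lemma Sw_foldr: "foldr (\<lambda>i g. S i \<circ> g) w g = Sw S w \<circ> g"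
  by (induction w arbitrary: g) (auto simp: Sw_def comp_assoc)

lemma Sw_snoc: "Sw S (w @ [i]) = Sw S w \<circ> S i"
proof -
  have "Sw S (w @ [i]) = foldr (\<lambda>i g. S i \<circ> g) w (S i \<circ> id)" by (simp add: Sw_def)
  then show ?thesis by (simp add: Sw_foldr)
qed

lemma rw_snoc: "rw r (w @ [i]) = rw r w * r i" by (simp add: rw_def)

lemma rw_pos: "\<forall>i<N. 0 < r i \<Longrightarrow> set w \<subseteq> {..<N} \<Longrightarrow> 0 < rw r w"
  by (induction w) (auto simp: rw_def)

lemma rmin_facts:
  assumes "N > 0" "\<forall>i<N. 0 < r i \<and> r i < 1"
  shows "0 < rmin N r" "rmin N r < 1" "\<And>i. i < N \<Longrightarrow> rmin N r \<le> r i"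
proof -
  have "rmin N r \<in> r ` {..<N}" unfolding rmin_def using assms(1) by (intro Min_in) auto
  then show "0 < rmin N r" "rmin N r < 1" using assms(2) by auto
  show "\<And>i. i < N \<Longrightarrow> rmin N r \<le> r i" unfolding rmin_def by (intro Min_le) auto
qed

lemma Jlev_bounds:
  assumes "N > 0" "\<forall>i<N. 0 < r i \<and> r i < 1" "x \<in> Jlev N r n"
  shows "set x \<subseteq> {..<N} \<and> rmin N r ^ Suc n < rw r x \<and> rw r x \<le> rmin N r ^ n"
proof (cases "n = 0")
  case True
  then show ?thesis using assms rmin_facts[OF assms(1,2)] by (simp add: Jlev_def rw_def)
next
  case False
  note rf = rmin_facts[OF assms(1,2)]
  from assms(3) False have x: "set x \<subseteq> {..<N}" "x \<noteq> []" "rw r x \<le> rmin N r ^ n"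
      "rmin N r ^ n < rw r (butlast x)" by (auto simp: Jlev_def)
  have xe: "x = butlast x @ [last x]" using x(2) by simp
  have lx: "last x < N" using x(1,2) last_in_set by blast
  have "rw r x = rw r (butlast x) * r (last x)" using xe rw_snoc by metis
  also have "\<dots> \<ge> rw r (butlast x) * rmin N r" using rf(3)[OF lx] rw_pos[of N r "butlast x"] assms(2) x(1)
    by (metis in_set_butlastD less_imp_le mult_left_mono subset_code(1))
  finally have "rw r x \<ge> rw r (butlast x) * rmin N r" .
  moreover have "rw r (butlast x) * rmin N r > rmin N r ^ n * rmin N r"
    using x(4) rf(1) by simp
  ultimately show ?thesis using x by (simp add: mult.commute)
qed

lemma Jlev_unique:
  assumes "N > 0" "\<forall>i<N. 0 < r i \<and> r i < 1" "x \<in> Jlev N r n" "x \<in> Jlev N r m"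
  shows "n = m"
proof -
  note rf = rmin_facts[OF assms(1,2)]
  have a: "rmin N r ^ Suc n < rmin N r ^ m" using Jlev_bounds[OF assms(1,2,3)] Jlev_bounds[OF assms(1,2,4)] by linarith
  have b: "rmin N r ^ Suc m < rmin N r ^ n" using Jlev_bounds[OF assms(1,2,3)] Jlev_bounds[OF assms(1,2,4)] by linarith
  have "m < Suc n" using a rf(1,2) power_strict_decreasing_iff by blast
  moreover have "n < Suc m" using b rf(1,2) power_strict_decreasing_iff by blast
  ultimately show ?thesis by simp
qed

lemma level_eq:
  assumes "N > 0" "\<forall>i<N. 0 < r i \<and> r i < 1" "x \<in> Jlev N r n"
  shows "level N r x = n"
  unfolding level_def using Jlev_unique[OF assms(1,2)] assms(3)
  by (intro Least_equality) auto

primrec addrw :: "nat \<Rightarrow> (nat \<Rightarrow> 'a \<Rightarrow> 'a) \<Rightarrow> 'a set \<Rightarrow> 'a \<Rightarrow> nat \<Rightarrow> nat list" where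
  "addrw N S K \<xi> 0 = []"
| "addrw N S K \<xi> (Suc k) = addrw N S K \<xi> k @ [SOME i. i < N \<and> \<xi> \<in> Sw S (addrw N S K \<xi> k @ [i]) ` K]"

lemma addrw_props:
  assumes "K = (\<Union>i<N. S i ` K)" "\<xi> \<in> K"
  shows "set (addrw N S K \<xi> k) \<subseteq> {..<N} \<and> \<xi> \<in> Sw S (addrw N S K \<xi> k) ` K \<and> length (addrw N S K \<xi> k) = k"
proof (induction k)
  case 0
  then show ?case using assms(2) by (simp add: Sw_def)
next
  case (Suc k)
  define w where "w = addrw N S K \<xi> k"
  from Suc w_def obtain p where p: "p \<in> K" "\<xi> = Sw S w p" by auto
  have "p \<in> (\<Union>i<N. S i ` K)" by (subst assms(1)[symmetric]) (rule p(1))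
  then obtain i q where iq: "i < N" "q \<in> K" "p = S i q" by blast
  have ex: "\<exists>i. i < N \<and> \<xi> \<in> Sw S (w @ [i]) ` K"
    using iq p by (intro exI[of _ i]) (auto simp: Sw_snoc)
  have "(SOME i. i < N \<and> \<xi> \<in> Sw S (w @ [i]) ` K) < N \<and> \<xi> \<in> Sw S (w @ [SOME i. i < N \<and> \<xi> \<in> Sw S (w @ [i]) ` K]) ` K"
    by (rule someI_ex[OF ex])
  then show ?case using Suc by (simp add: w_def[symmetric])
qed

lemma addrw_prefix: "k \<le> k' \<Longrightarrow> prefix (addrw N S K \<xi> k) (addrw N S K \<xi> k')"
proof (induction k' rule: dec_induct)
  case base
  then show ?case by simp
next
  case (step m)
  then show ?case by (simp add: prefix_def) (metis append.assoc)
qed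

lemma addrw_rw:
  assumes "N > 0" "\<forall>i<N. 0 < r i \<and> r i < 1" "K = (\<Union>i<N. S i ` K)" "\<xi> \<in> K"
  shows "rw r (addrw N S K \<xi> k) \<le> Max (r ` {..<N}) ^ k"
proof (induction k)
  case 0
  then show ?case by (simp add: rw_def)
next
  case (Suc k)
  define w where "w = addrw N S K \<xi> k"
  define i where "i = (SOME i. i < N \<and> \<xi> \<in> Sw S (w @ [i]) ` K)"
  have "set (addrw N S K \<xi> (Suc k)) \<subseteq> {..<N}" using addrw_props[OF assms(3,4)] by blast
  then have iN: "i < N" by (simp add: w_def i_def)
  have ri: "r i \<le> Max (r ` {..<N})" using iN by (intro Max_ge) auto
  have "rw r (addrw N S K \<xi> (Suc k)) = rw r w * r i" by (simp add: w_def i_def rw_snoc)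
  also have "\<dots> \<le> Max (r ` {..<N}) ^ k * Max (r ` {..<N})"
    using Suc ri assms(2) iN rw_pos[of N r w] addrw_props[OF assms(3,4), of k]
    by (intro mult_mono) (auto simp: w_def)
  finally show ?case by (simp add: mult.commute)
qed

lemma ray_exists:
  assumes N: "N > 0" and rr: "\<forall>i<N. 0 < r i \<and> r i < 1" and K: "K = (\<Union>i<N. S i ` K)" and xi: "\<xi> \<in> K"
  shows "\<exists>xs. geodesic_ray N r S K xs \<xi>"
proof -
  define W where "W = addrw N S K \<xi>"
  define r0 where "r0 = rmin N r"
  define R where "R = Max (r ` {..<N})"
  note rf = rmin_facts[OF N rr, folded r0_def]
  have "R \<in> r ` {..<N}" unfolding R_def using N by (intro Max_in) auto
  then have R1: "R < 1" using rr by auto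
  have WP: "\<And>k. set (W k) \<subseteq> {..<N} \<and> \<xi> \<in> Sw S (W k) ` K \<and> length (W k) = k"
    unfolding W_def by (rule addrw_props[OF K xi])
  have Wr: "\<And>k. rw r (W k) \<le> R ^ k" unfolding W_def R_def by (rule addrw_rw[OF N rr K xi])
  have exk: "\<exists>k. rw r (W k) \<le> r0 ^ n" for n
  proof -
    obtain k where "R ^ k < r0 ^ n" using real_arch_pow_inv[OF _ R1, of "r0 ^ n"] rf by auto
    then show ?thesis using Wr[of k] by (intro exI[of _ k]) linarith
  qed
  define kk where "kk n = (LEAST k. rw r (W k) \<le> r0 ^ n)" for n
  have kk1: "rw r (W (kk n)) \<le> r0 ^ n" for n unfolding kk_def by (rule LeastI_ex[OF exk])
  have kk2: "\<not> rw r (W j) \<le> r0 ^ n" if "j < kk n" for j n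
    using that unfolding kk_def by (rule not_less_Least)
  have kkmono: "kk n \<le> kk (Suc n)" for n
  proof -
    have p: "r0 ^ Suc n \<le> r0 ^ n" by (rule power_decreasing) (use rf in auto)
    have "rw r (W (kk (Suc n))) \<le> r0 ^ n"
      using order_trans[OF kk1[of "Suc n"] p] .
    then show ?thesis unfolding kk_def by (rule Least_le)
  qed
  have W0: "W 0 = []" by (simp add: W_def)
  have WS: "W (Suc j) = W j @ [SOME i. i < N \<and> \<xi> \<in> Sw S (W j @ [i]) ` K]" for j by (simp add: W_def)
  have inJ: "W (kk n) \<in> Jlev N r n" for n
  proof (cases "n = 0")
    case True
    have "kk 0 \<le> 0" unfolding kk_def by (rule Least_le) (simp add: W0 rw_def)
    then show ?thesis using True by (simp add: W0 Jlev_def)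
  next
    case False
    have "kk n \<noteq> 0"
    proof
      assume "kk n = 0"
      then have "1 \<le> r0 ^ n" using kk1[of n] by (simp add: W0 rw_def)
      moreover have "r0 ^ n < 1" using rf False by (simp add: power_less_one_iff)
      ultimately show False by simp
    qed
    then obtain j where j: "kk n = Suc j" using not0_implies_Suc by blast
    have "\<not> rw r (W j) \<le> r0 ^ n" using kk2[of j n] j by simp
    moreover have "butlast (W (kk n)) = W j" using j WS by simp
    moreover have "W (kk n) \<noteq> []" using WP[of "kk n"] j by auto
    ultimately show ?thesis using False kk1[of n] WP[of "kk n"] by (simp add: Jlev_def r0_def)
  qed
  have "geodesic_ray N r S K (\<lambda>n. W (kk n)) \<xi>"
    unfolding geodesic_ray_def
  proof (intro allI conjI)
    fix n
    show "W (kk n) \<in> Jlev N r n" by (rule inJ)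
    show "prefix (W (kk n)) (W (kk (Suc n)))" unfolding W_def by (rule addrw_prefix[OF kkmono])
    show "\<xi> \<in> Sw S (W (kk n)) ` K" using WP[of "kk n"] by (rule conjE) (erule conjE)
  qed
  then show ?thesis by blast
qed

lemma geom_conv:
  fixes a :: "nat \<Rightarrow> real"
  assumes ab: "\<And>n. \<bar>a (Suc n) - a n\<bar> \<le> B * s^n" and s0: "0 \<le> s" and s1: "s < 1"
  shows "convergent a \<and> (\<forall>n. \<bar>lim a - a n\<bar> \<le> B * s^n / (1 - s))"
proof -
  define d where "d k = a (Suc k) - a k" for k
  have sg: "summable (\<lambda>k. B * s^k)" using s0 s1 by (intro summable_mult summable_geometric) simp
  have sda: "summable (\<lambda>k. \<bar>d k\<bar>)"
    by (rule summable_comparison_test[OF _ sg]) (use ab in \<open>auto simp: d_def\<close>)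
  have sd: "summable d" using sda summable_rabs_cancel by blast
  have tel: "a n = a 0 + (\<Sum>k<n. d k)" for n by (simp add: d_def sum_lessThan_telescope)
  have "(\<lambda>n. a 0 + (\<Sum>k<n. d k)) \<longlonglongrightarrow> a 0 + suminf d"
    by (intro tendsto_add tendsto_const summable_LIMSEQ[OF sd])
  moreover have "(\<lambda>n. a 0 + (\<Sum>k<n. d k)) = a" by (rule ext) (rule tel[symmetric])
  ultimately have L: "a \<longlonglongrightarrow> a 0 + suminf d" by simp
  then have c: "convergent a" by (rule convergentI)
  have la: "lim a = a 0 + suminf d" using L by (rule limI)
  have "\<bar>lim a - a n\<bar> \<le> B * s^n / (1 - s)" for n
  proof -
    have "lim a - a n = suminf d - (\<Sum>k<n. d k)" using la tel[of n] by simp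
    also have "\<dots> = (\<Sum>k. d (k + n))" using suminf_minus_initial_segment[OF sd] by simp
    finally have e: "lim a - a n = (\<Sum>k. d (k + n))" .
    have s1': "summable (\<lambda>k. \<bar>d (k + n)\<bar>)" using summable_ignore_initial_segment[OF sda] by simp
    have sg2: "summable (\<lambda>k. B * s^n * s^k)" using s0 s1 by (intro summable_mult summable_geometric) simp
    have "\<bar>\<Sum>k. d (k + n)\<bar> \<le> (\<Sum>k. \<bar>d (k + n)\<bar>)" by (rule summable_rabs[OF s1'])
    also have "\<dots> \<le> (\<Sum>k. B * s^n * s^k)"
      by (rule suminf_le[OF _ s1' sg2]) (use ab[of "_ + n"] in \<open>simp add: d_def power_add mult_ac\<close>)
    also have "\<dots> = B * s^n / (1 - s)" using suminf_mult[OF summable_geometric[of s]] suminf_geometric[of s] s0 s1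
      by simp
    finally show ?thesis using e by simp
  qed
  then show ?thesis using c by blast
qed


lemma powr_pow: "0 < x \<Longrightarrow> (x ^ n) powr a = (x powr a) ^ n" for x :: real
  by (induction n) (simp_all add: powr_mult)

lemma base_lb:
  assumes N: "N > 0" and rr: "\<forall>i<N. 0 < r i \<and> r i < 1" and x: "x \<in> Jlev N r n" and lam: "0 < lam"
  shows "min 1 (rmin N r powr \<alpha>) * (rmin N r powr \<alpha>) ^ n / lam ^ n \<le> base_cond N r \<alpha> lam x"
proof -
  note rf = rmin_facts[OF N rr]
  define r0 where "r0 = rmin N r"
  define P where "P = r0 powr \<alpha>"
  have P0: "P > 0" using rf by (simp add: P_def r0_def)
  have bd: "r0 ^ Suc n < rw r x" "rw r x \<le> r0 ^ n" using Jlev_bounds[OF N rr x] by (auto simp: r0_def)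
  have r00: "0 < r0" using rf by (simp add: r0_def)
  have "min 1 P * P ^ n \<le> rw r x powr \<alpha>"
  proof (cases "\<alpha> \<ge> 0")
    case True
    have "(r0 ^ Suc n) powr \<alpha> \<le> rw r x powr \<alpha>" using True bd r00 by (intro powr_mono2) auto
    moreover have "(r0 ^ Suc n) powr \<alpha> = P * P ^ n" unfolding P_def powr_pow[OF r00] by simp
    moreover have "min 1 P * P ^ n \<le> P * P ^ n" using P0 by (intro mult_right_mono) auto
    ultimately show ?thesis by linarith
  next
    case False
    have rwp: "0 < rw r x" using less_trans[OF zero_less_power[OF r00] bd(1)] .
    have "(r0 ^ n) powr \<alpha> \<le> rw r x powr \<alpha>" using False bd rwp by (intro powr_mono2') auto
    moreover have "(r0 ^ n) powr \<alpha> = P ^ n" using r00 by (simp add: powr_pow P_def)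
    moreover have "min 1 P * P ^ n \<le> P ^ n" using P0 by (intro mult_left_le_one_le) auto
    ultimately show ?thesis by linarith
  qed
  then show ?thesis unfolding base_cond_def level_eq[OF N rr x] using lam
    by (simp add: divide_right_mono P_def r0_def)
qed

lemma energy_term:
  assumes "adj N r S K \<gamma> x y" "energy N r S K \<gamma> \<alpha> lam h f < \<infinity>"
  shows "cond N r S K \<gamma> \<alpha> lam h x y * (f x - f y)^2 \<le> 2 * enn2real (energy N r S K \<gamma> \<alpha> lam h f)"
proof -
  define t where "t = cond N r S K \<gamma> \<alpha> lam h x y * (f x - f y)^2"
  define g where "g = (\<lambda>(x, y). ennreal (cond N r S K \<gamma> \<alpha> lam h x y * (f x - f y)^2))"
  define A where "A = {(x, y). adj N r S K \<gamma> x y}"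
  have en: "energy N r S K \<gamma> \<alpha> lam h f = ennreal (1/2) * infsum g A"
    by (simp add: energy_def g_def A_def)
  show ?thesis
  proof (cases "t \<ge> 0")
    case False
    have "t \<le> 2 * enn2real (energy N r S K \<gamma> \<alpha> lam h f)"
      using False enn2real_nonneg[of "energy N r S K \<gamma> \<alpha> lam h f"] by linarith
    then show ?thesis by (simp add: t_def)
  next
    case True
    have "ennreal t = infsum g {(x, y)}" by (simp add: g_def t_def)
    also have "\<dots> \<le> infsum g A"
      by (rule infsum_mono_neutral) (auto simp: A_def assms(1) intro: nonneg_summable_on_complete)
    finally have "ennreal (1/2) * ennreal t \<le> energy N r S K \<gamma> \<alpha> lam h f"
      unfolding en by (rule mult_left_mono) simp
    note prev = this
    have eq: "ennreal (1/2 * t) = ennreal (1/2) * ennreal t" by (rule ennreal_mult') simp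
    have "ennreal (1/2 * t) \<le> energy N r S K \<gamma> \<alpha> lam h f" unfolding eq by (rule prev)
    then have "enn2real (ennreal (1/2 * t)) \<le> enn2real (energy N r S K \<gamma> \<alpha> lam h f)"
      using assms(2) by (intro enn2real_mono) auto
    then show ?thesis using True by (simp add: t_def)
  qed
qed

lemma sq_bound:
  fixes c d T Q :: real
  assumes "0 < Q" "Q \<le> c" "c * d^2 \<le> T"
  shows "\<bar>d\<bar> \<le> sqrt (T / Q)"
proof -
  have "Q * d^2 \<le> c * d^2" using assms by (intro mult_right_mono) auto
  then have "d^2 \<le> T / Q" using assms by (simp add: field_simps)
  then show ?thesis using real_sqrt_le_mono by fastforce
qed

theorem lemma3p4:
  fixes N :: nat and S :: "nat \<Rightarrow> 'a::euclidean_space \<Rightarrow> 'a" and r :: "nat \<Rightarrow> real"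
    and K :: "'a set" and \<gamma> lam :: real
    and h :: "nat list \<Rightarrow> nat list \<Rightarrow> real" and f :: "nat list \<Rightarrow> real"
  assumes "N \<ge> 2"
    and "\<forall>i<N. 0 < r i \<and> r i < 1 \<and> similitude (S i) (r i)"
    and "open_set_condition N S"
    and "self_similar_set N S K"
    and "\<gamma> > 0"
    and "0 < lam" and "lam < rmin N r powr hausdorff_dim K"
    and "admissible_hcond N r S K \<gamma> (hausdorff_dim K) lam h"
    and "energy N r S K \<gamma> (hausdorff_dim K) lam h f < \<infinity>"
  shows "continuous_on K (trace N r S K f)"
  proof -
  note as = assms
  have N: "N > 0" using as(1) by simp
  have rr: "\<forall>i<N. 0 < r i \<and> r i < 1" using as(2) by blast
  have Keq: "K = (\<Union>i<N. S i ` K)" using as(4) by (simp add: self_similar_set_def)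
  have Kne: "K \<noteq> {}" using as(4) by (simp add: self_similar_set_def)
  note rf = rmin_facts[OF N rr]
  define \<alpha> where "\<alpha> = hausdorff_dim K"
  define r0 where "r0 = rmin N r"
  define P where "P = r0 powr \<alpha>"
  define E where "E = enn2real (energy N r S K \<gamma> \<alpha> lam h f)"
  define m0 where "m0 = min 1 P"
  obtain C where C0: "C > 0" and hC: "\<And>x y. hedge N r S K \<gamma> x y \<Longrightarrow>
        h x y = h y x \<and> base_cond N r \<alpha> lam x / C \<le> h x y \<and> h x y \<le> C * base_cond N r \<alpha> lam x"
    using as(8) unfolding admissible_hcond_def \<alpha>_def by blast
  define C1 where "C1 = max 1 C"
  define q where "q = lam / P"
  define s where "s = sqrt q"
  define B where "B = sqrt (2 * E * C1 / m0)"
  have fin: "energy N r S K \<gamma> \<alpha> lam h f < \<infinity>" using as(9) by (simp add: \<alpha>_def)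
  have P0: "P > 0" using rf by (simp add: P_def r0_def)
  have m00: "m0 > 0" using P0 by (simp add: m0_def)
  have lam0: "lam > 0" using as(6) .
  have q0: "q > 0" using P0 lam0 by (simp add: q_def)
  have q1: "q < 1" using as(7) P0 by (simp add: q_def P_def r0_def \<alpha>_def)
  have s0: "0 \<le> s" and s1: "s < 1" using q0 q1 by (auto simp: s_def)
  have C10: "C1 \<ge> 1" "C1 \<ge> C" by (auto simp: C1_def)
  have E0: "E \<ge> 0" by (simp add: E_def)
  have B0: "B \<ge> 0" using E0 m00 C10 by (simp add: B_def)
  have r00: "0 < r0" using rf by (simp add: r0_def)
  have qn: "q ^ n = lam ^ n / P ^ n" for n by (simp add: q_def power_divide)
  have blb: "m0 / q ^ n \<le> base_cond N r \<alpha> lam x" if "x \<in> Jlev N r n" for x n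
    using base_lb[OF N rr that lam0, of \<alpha>] qn[of n] by (simp add: m0_def P_def r0_def)
  have key: "\<bar>d\<bar> \<le> B * s ^ n" if "m0 / (C1 * q ^ n) \<le> c" "c * d^2 \<le> 2 * E" for c d n
  proof -
    have Qp: "0 < m0 / (C1 * q ^ n)" using m00 C10 q0 by simp
    have "\<bar>d\<bar> \<le> sqrt (2 * E / (m0 / (C1 * q ^ n)))" by (rule sq_bound[OF Qp that])
    also have "2 * E / (m0 / (C1 * q ^ n)) = (2 * E * C1 / m0) * q ^ n" by simp
    also have "sqrt \<dots> = B * s ^ n" by (simp only: B_def s_def real_sqrt_mult real_sqrt_power)
    finally show ?thesis .
  qed
  have disj: "\<not> vedge N r x y" if "x \<in> Jlev N r n" "y \<in> Jlev N r n" for x y n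
  proof
    assume "vedge N r x y"
    then obtain m where m: "m \<ge> 1" "x \<in> Jlev N r m" "y \<in> Jlev N r (m - 1)" by (auto simp: vedge_def)
    have "m = n" using Jlev_unique[OF N rr m(2) that(1)] .
    moreover have "m - 1 = n" using Jlev_unique[OF N rr m(3) that(2)] .
    ultimately show False using m(1) by simp
  qed
  have vbound: "\<bar>f (X (Suc n)) - f (X n)\<bar> \<le> B * s ^ n" if X: "geodesic_ray N r S K X \<xi>" for X \<xi> n
  proof -
    have XJ: "X (Suc n) \<in> Jlev N r (Suc n)" "X n \<in> Jlev N r n" "prefix (X n) (X (Suc n))"
      using X by (auto simp: geodesic_ray_def)
    have ve: "vedge N r (X (Suc n)) (X n)" unfolding vedge_def using XJ by (intro exI[of _ "Suc n"]) auto
    have ad: "adj N r S K \<gamma> (X (Suc n)) (X n)" using ve by (simp add: adj_def)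
    have cd: "cond N r S K \<gamma> \<alpha> lam h (X (Suc n)) (X n) = base_cond N r \<alpha> lam (X (Suc n))"
      using ve by (simp add: cond_def)
    have "m0 / (C1 * q ^ n) \<le> m0 / q ^ Suc n"
    proof -
      have a1: "q * q ^ n \<le> q ^ n" using q0 q1 by (intro mult_left_le_one_le) auto
      have a2: "1 * q ^ n \<le> C1 * q ^ n" using q0 C10 by (intro mult_right_mono) auto
      have "q ^ Suc n \<le> C1 * q ^ n" using a1 a2 by simp
      then show ?thesis using m00 q0 by (intro divide_left_mono) auto
    qed
    also have "\<dots> \<le> base_cond N r \<alpha> lam (X (Suc n))" by (rule blb[OF XJ(1)])
    finally have c1: "m0 / (C1 * q ^ n) \<le> cond N r S K \<gamma> \<alpha> lam h (X (Suc n)) (X n)" using cd by simp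
    show ?thesis using key[OF c1 energy_term[OF ad fin, folded E_def]] .
  qed
  have hbound: "\<bar>f y - f x\<bar> \<le> B * s ^ n"
    if xy: "x \<in> Jlev N r n" "y \<in> Jlev N r n" "\<xi> \<in> Sw S x ` K" "\<eta> \<in> Sw S y ` K"
      "dist \<xi> \<eta> \<le> \<gamma> * r0 ^ n" for x y \<xi> \<eta> n
  proof (cases "x = y")
    case True
    then show ?thesis using B0 s0 by simp
  next
    case False
    obtain p1 p2 where p: "p1 \<in> K" "p2 \<in> K" "\<xi> = Sw S x p1" "\<eta> = Sw S y p2" using xy(3,4) by blast
    have "(INF p \<in> K \<times> K. dist (Sw S x (fst p)) (Sw S y (snd p))) \<le> dist (Sw S x (fst (p1, p2))) (Sw S y (snd (p1, p2)))"
      by (rule cINF_lower) (auto intro!: bdd_belowI[of _ 0] simp: p)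
    then have "(INF p \<in> K \<times> K. dist (Sw S x (fst p)) (Sw S y (snd p))) \<le> \<gamma> * r0 ^ n"
      using xy(5) p by simp
    then have he: "hedge N r S K \<gamma> x y" unfolding hedge_def r0_def using xy(1,2) False by blast
    have ad: "adj N r S K \<gamma> x y" using he by (simp add: adj_def)
    have cd: "cond N r S K \<gamma> \<alpha> lam h x y = h x y"
      using he disj[OF xy(1,2)] disj[OF xy(2,1)] by (simp add: cond_def)
    have "m0 / (C1 * q ^ n) \<le> (m0 / q ^ n) / C"
      using m00 q0 C0 C10 by (simp add: field_simps mult_right_mono)
    also have "\<dots> \<le> base_cond N r \<alpha> lam x / C" using divide_right_mono[OF blb[OF xy(1)], of C] C0 by simp
    also have "\<dots> \<le> h x y" using hC[OF he] by blast
    finally have c1: "m0 / (C1 * q ^ n) \<le> cond N r S K \<gamma> \<alpha> lam h x y" using cd by simp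
    have "\<bar>f x - f y\<bar> \<le> B * s ^ n" using key[OF c1 energy_term[OF ad fin, folded E_def]] .
    then show ?thesis by (simp add: abs_minus_commute)
  qed
  define ray where "ray \<xi> = (SOME xs. geodesic_ray N r S K xs \<xi>)" for \<xi>
  have rayg: "geodesic_ray N r S K (ray \<xi>) \<xi>" if "\<xi> \<in> K" for \<xi>
    unfolding ray_def using ray_exists[OF N rr Keq that] by (rule someI_ex)
  have tr: "\<bar>trace N r S K f \<xi> - f (ray \<xi> n)\<bar> \<le> B * s ^ n / (1 - s)" if "\<xi> \<in> K" for \<xi> n
  proof -
    have "convergent (\<lambda>n. f (ray \<xi> n)) \<and> (\<forall>n. \<bar>lim (\<lambda>n. f (ray \<xi> n)) - f (ray \<xi> n)\<bar> \<le> B * s^n / (1 - s))"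
      by (rule geom_conv[OF vbound[OF rayg[OF that]] s0 s1])
    then show ?thesis by (simp add: trace_def ray_def)
  qed
  have rj: "ray \<xi> n \<in> Jlev N r n" "\<xi> \<in> Sw S (ray \<xi> n) ` K" if "\<xi> \<in> K" for \<xi> n
    using rayg[OF that] by (auto simp: geodesic_ray_def)
  define M where "M = 1 + 2 / (1 - s)"
  have M0: "M \<ge> 0" using s1 by (simp add: M_def)
  show ?thesis
    unfolding continuous_on_iff \<alpha>_def[symmetric]
  proof (intro ballI allI impI)
    fix \<xi> :: 'a and e :: real
    assume xi: "\<xi> \<in> K" and e: "e > 0"
    have ep: "e / (B * M + 1) > 0" using e B0 M0 by (simp add: add_nonneg_pos)
    obtain n where sn: "s ^ n < e / (B * M + 1)" using real_arch_pow_inv[OF ep s1] by blast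
    have "B * M * s ^ n \<le> (B * M + 1) * s ^ n" using s0 by (simp add: distrib_right)
    also have "\<dots> < e"
    proof -
      have bm: "0 < B * M + 1" using B0 M0 by (metis add_nonneg_pos mult_nonneg_nonneg zero_less_one)
      have "s ^ n * (B * M + 1) < e" using sn pos_less_divide_eq[OF bm] by blast
      then show ?thesis by (simp add: mult.commute)
    qed
    finally have small: "B * M * s ^ n < e" .
    show "\<exists>d>0. \<forall>\<eta>\<in>K. dist \<eta> \<xi> < d \<longrightarrow> dist (trace N r S K f \<eta>) (trace N r S K f \<xi>) < e"
    proof (intro exI[of _ "\<gamma> * r0 ^ n"] conjI ballI impI)
      show "\<gamma> * r0 ^ n > 0" using as(5) r00 by simp
      fix \<eta> assume eta: "\<eta> \<in> K" and d: "dist \<eta> \<xi> < \<gamma> * r0 ^ n"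
      have h1: "\<bar>f (ray \<xi> n) - f (ray \<eta> n)\<bar> \<le> B * s ^ n"
        by (rule hbound[OF rj(1)[OF eta] rj(1)[OF xi] rj(2)[OF eta] rj(2)[OF xi]]) (use d in simp)
      have t1: "\<bar>trace N r S K f \<eta> - f (ray \<eta> n)\<bar> \<le> B * s ^ n / (1 - s)" by (rule tr[OF eta])
      have t2: "\<bar>trace N r S K f \<xi> - f (ray \<xi> n)\<bar> \<le> B * s ^ n / (1 - s)" by (rule tr[OF xi])
      have "dist (trace N r S K f \<eta>) (trace N r S K f \<xi>) \<le> B * s ^ n / (1 - s) + B * s ^ n + B * s ^ n / (1 - s)"
        using h1 t1 t2 unfolding dist_real_def by linarith
      also have "\<dots> = B * M * s ^ n" by (simp add: M_def field_simps)
      finally show "dist (trace N r S K f \<eta>) (trace N r S K f \<xi>) < e" using small by linarith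
    qed
  qed
qed

end
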